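(* Let $k\ge 2$ and $C_{8k}=v_0v_1\cdots v_{8k-1}v_0$. Let $\mathscr A=\{\{v_{2i},v_{4k+2i}\}: 0\le i\le 2k-1\}$ and $\mathscr B=\{\{v_{2j+1},v_{2k+2j+1}\}: j\in[0,k-1]\cup[2k,3k-1]\}$. Let $G_{4k}(\mathscr A,\mathscr B)$ be the graph obtained from $C_{8k}$ by identifying the two vertices of each block of $\mathscr A\cup\mathscr B$ into a single vertex. Then $G_{4k}(\mathscr A,\mathscr B)\cong C_{4k}(1,2k-1)$.
   Context: Identifying a set of pairwise nonadjacent vertices means replacing them by one new vertex incident to all edges previously incident to any of them. For an integer $n\ge 3$ and integers $s_1,\dots,s_k$, the circulant graph $C_n(s_1,\dots,s_k)$ has vertex set $\mathbb Z_n$, with distinct $u,v$ adjacent iff $u-v\equiv\pm s_i\pmod n$ for some $i$. $[a,b]$ denotes the set of integers from $a$ to $b$. *)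

theory Defs
  imports Main "HOL-Library.Multiset"
begin

text \<open>Graphs (possibly with multiple edges) are represented as a pair of a
vertex set and a multiset of edges, each edge being the set of its end vertices.\<close>

type_synonym 'a mgraph = "'a set \<times> 'a set multiset"

definition cycle_graph :: "nat \<Rightarrow> nat mgraph" where
  "cycle_graph n = ({0..<n}, image_mset (\<lambda>i. {i, (i + 1) mod n}) (mset_set {0..<n}))"

definition circulant :: "nat \<Rightarrow> int set \<Rightarrow> nat mgraph" where
  "circulant n S = ({0..<n}, mset_set {{u, v} | u v. u < n \<and> v < n \<and> u \<noteq> v \<and>
      (\<exists>s\<in>S. (int u - int v) mod int n = s mod int n \<or> (int u - int v) mod int n = (- s) mod int n)})"

definition identify_map :: "'a set set \<Rightarrow> 'a \<Rightarrow> 'a set" where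
  "identify_map P x = (if \<exists>B\<in>P. x \<in> B then (THE B. B \<in> P \<and> x \<in> B) else {x})"

definition identify :: "'a mgraph \<Rightarrow> 'a set set \<Rightarrow> 'a set mgraph" where
  "identify G P = (identify_map P ` fst G, image_mset (image (identify_map P)) (snd G))"

definition mgraph_iso :: "'a mgraph \<Rightarrow> 'b mgraph \<Rightarrow> bool" where
  "mgraph_iso G H = (\<exists>f. bij_betw f (fst G) (fst H) \<and> image_mset (image f) (snd G) = snd H)"

end

theory Submission
  imports Defs
begin


definition gk :: "nat \<Rightarrow> nat \<Rightarrow> nat" where
"gk k m = (if even m then (if m < 4*k then m else m - 4*k)
   else (if m < 2*k then m else if m < 6*k then m - 2*k else m - 4*k))"

definition sc :: "nat \<Rightarrow> nat \<Rightarrow> nat" where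
"sc k m = (if m + 1 = 8*k then 0 else m + 1)"

definition blk :: "nat \<Rightarrow> nat \<Rightarrow> nat set" where
"blk k m = (if even m then (if m < 4*k then {m, m+4*k} else {m-4*k, m})
   else (if m < 2*k then {m, m+2*k} else if m < 4*k then {m-2*k, m}
   else if m < 6*k then {m, m+2*k} else {m-2*k, m}))"

definition PP :: "nat \<Rightarrow> nat set set" where
"PP k = {{2 * i, 4 * k + 2 * i} | i. i \<le> 2 * k - 1} \<union>
         {{2 * j + 1, 2 * k + 2 * j + 1} | j. j \<le> k - 1 \<or> (2 * k \<le> j \<and> j \<le> 3 * k - 1)}"

lemma blk_in: assumes "k \<ge> 2" "m < 8*k" shows "blk k m \<in> PP k"
proof (cases "even m")
  case True
  then obtain i where i: "m = 2*i" by blast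
  show ?thesis
  proof (cases "m < 4*k")
    case True
    then have "blk k m = {2*i, 4*k+2*i} \<and> i \<le> 2*k-1" using i by (auto simp: blk_def add.commute)
    then show ?thesis unfolding PP_def by blast
  next
    case False
    then have "blk k m = {2*(i-2*k), 4*k+2*(i-2*k)} \<and> i-2*k \<le> 2*k-1" using i assms by (auto simp: blk_def)
    then show ?thesis unfolding PP_def by blast
  qed
next
  case False
  then obtain j where j: "m = 2*j+1" using oddE by blast
  consider "m < 2*k" | "2*k \<le> m" "m < 4*k" | "4*k \<le> m" "m < 6*k" | "6*k \<le> m" by linarith
  then show ?thesis
  proof cases
    case 1
    then have "blk k m = {2*j+1, 2*k+2*j+1} \<and> j \<le> k-1" using j by (auto simp: blk_def)
    then show ?thesis unfolding PP_def by blast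
  next
    case 2
    then have "blk k m = {2*(j-k)+1, 2*k+2*(j-k)+1} \<and> j-k \<le> k-1" using j by (auto simp: blk_def)
    then show ?thesis unfolding PP_def by blast
  next
    case 3
    then have "blk k m = {2*j+1, 2*k+2*j+1} \<and> 2*k \<le> j \<and> j \<le> 3*k-1" using j by (auto simp: blk_def)
    then show ?thesis unfolding PP_def by blast
  next
    case 4
    then have "blk k m = {2*(j-k)+1, 2*k+2*(j-k)+1} \<and> 2*k \<le> j-k \<and> j-k \<le> 3*k-1" using j assms by (auto simp: blk_def)
    then show ?thesis unfolding PP_def by blast
  qed
qed

lemma blk_uniq: assumes "k \<ge> 2" "m < 8*k" "B \<in> PP k" "m \<in> B" shows "B = blk k m"
  using assms unfolding PP_def blk_def
  by (auto; presburger)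


lemma m_in_blk: "m \<in> blk k m" by (simp add: blk_def)

lemma idm: assumes "k \<ge> 2" "m < 8*k" shows "identify_map (PP k) m = blk k m"
proof -
  have bi: "blk k m \<in> PP k" by (rule blk_in[OF assms])
  have mb: "m \<in> blk k m" by (rule m_in_blk)
  have ex: "\<exists>B\<in>PP k. m \<in> B" using bi mb by blast
  have "(THE B. B \<in> PP k \<and> m \<in> B) = blk k m"
  proof (rule the_equality)
    show "blk k m \<in> PP k \<and> m \<in> blk k m" using bi mb by blast
  next
    fix B assume "B \<in> PP k \<and> m \<in> B"
    then show "B = blk k m" using blk_uniq[OF assms] by blast
  qed
  then show ?thesis using ex unfolding identify_map_def by simp
qed

lemma gk_ev: "gk k (2*q) = (if 2*q < 4*k then 2*q else 2*q - 4*k)" by (simp add: gk_def)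
lemma gk_od: "gk k (2*q+1) = (if 2*q+1 < 2*k then 2*q+1 else if 2*q+1 < 6*k then 2*q+1-2*k else 2*q+1-4*k)" by (simp add: gk_def)
lemma gk_od2: "gk k (Suc (2*q)) = (if 2*q+1 < 2*k then 2*q+1 else if 2*q+1 < 6*k then 2*q+1-2*k else 2*q+1-4*k)" using gk_od by simp
lemma gk_ev2: "gk k (2*q+2) = (if 2*q+2 < 4*k then 2*q+2 else 2*q+2 - 4*k)" using gk_ev[of k "q+1"] by simp
lemma blk_ev: "blk k (2*q) = (if 2*q < 4*k then {2*q, 2*q+4*k} else {2*q-4*k, 2*q})" by (simp add: blk_def)
lemma blk_od: "blk k (2*q+1) = (if 2*q+1 < 2*k then {2*q+1, 2*q+1+2*k} else if 2*q+1 < 4*k then {2*q+1-2*k, 2*q+1}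
   else if 2*q+1 < 6*k then {2*q+1, 2*q+1+2*k} else {2*q+1-2*k, 2*q+1})" by (simp add: blk_def)
lemma evod: obtains (E) q where "(m::nat) = 2*q" | (O) q where "m = 2*q+1"
  by (metis evenE oddE)

lemma gblk: assumes "m < 8*k" shows "gk k (Min (blk k m)) = gk k m"
  using assms
proof (cases m rule: evod)
  case (E q)
  then show ?thesis using assms by (simp only: blk_ev gk_ev) (auto simp: gk_def)
next
  case (O q)
  then show ?thesis using assms by (simp only: blk_od gk_od) (auto simp: gk_def)
qed

definition RR :: "nat \<Rightarrow> nat \<Rightarrow> nat set" where
"RR k x = (if even x then {x, x+4*k} else if x < 2*k then {x, x+2*k} else {x+2*k, x+4*k})"

lemma blkR: assumes "m < 8*k" shows "blk k m = RR k (gk k m)"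
  using assms
proof (cases m rule: evod)
  case (E q)
  then show ?thesis using assms by (simp only: blk_ev gk_ev) (auto simp: RR_def)
next
  case (O q)
  then show ?thesis using assms by (simp only: blk_od gk_od) (auto simp: RR_def)
qed

lemma ginj: assumes "m < 8*k" "m' < 8*k" "gk k m = gk k m'" shows "blk k m = blk k m'"
  using assms blkR by metis

lemma grange: assumes "m < 8*k" shows "gk k m < 4*k"
  using assms unfolding gk_def by auto

lemma gsurj: assumes "x < 4*k" shows "\<exists>m<8*k. gk k m = x"
proof (cases "even x \<or> x < 2*k")
  case True
  then show ?thesis using assms by (intro exI[of _ x]) (auto simp: gk_def)
next
  case False
  then show ?thesis using assms by (intro exI[of _ "x+2*k"]) (auto simp: gk_def)
qed

lemma sc_lt: "m < 8*k \<Longrightarrow> sc k m < 8*k" by (auto simp: sc_def)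
lemma sc_mod: "m < 8*k \<Longrightarrow> (m+1) mod (8*k) = sc k m" by (auto simp: sc_def)



definition ct :: "nat \<Rightarrow> nat \<Rightarrow> nat" where
"ct k m = (if m < 2*k \<or> 6*k \<le> m then 0 else 1)"
definition cx :: "nat \<Rightarrow> nat \<Rightarrow> nat" where
"cx k m = (if m < 2*k then m else if 6*k \<le> m then m - 4*k
   else if even m then m + 1 - 2*k else if m + 1 < 4*k then m + 1 else if m + 1 = 4*k then 0 else m + 1 - 4*k)"
definition Ek :: "nat \<Rightarrow> nat \<Rightarrow> nat \<Rightarrow> nat set" where
"Ek k x t = {x, if t = 0 then (if x+1 < 4*k then x+1 else 0) else (if x+2*k-1 < 4*k then x+2*k-1 else x+2*k-1-4*k)}"

lemma Ek_inj: assumes "k \<ge> 2" "x < 4*k" "x' < 4*k" "t \<le> 1" "t' \<le> 1" "Ek k x t = Ek k x' t'"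
  shows "x = x' \<and> t = t'"
  using assms unfolding Ek_def doubleton_eq_iff by (auto split: if_splits)

definition dec :: "nat \<Rightarrow> nat \<Rightarrow> nat \<Rightarrow> nat" where
"dec k x t = (if t = 0 then (if x < 2*k then x else x + 4*k)
   else if odd x then x + 2*k - 1 else if x = 0 then 4*k - 1 else if x \<le> 2*k then x + 4*k - 1 else x - 1)"

lemma dec_code: assumes k: "k \<ge> 2" and m: "m < 8*k" shows "dec k (cx k m) (ct k m) = m"
proof (cases m rule: evod)
  case (E q)
  consider "m < 2*k" | "6*k \<le> m" | "2*k \<le> m" "m < 6*k" by linarith
  then show ?thesis
  proof cases
    case 1 then show ?thesis by (simp add: cx_def ct_def dec_def)
  next
    case 2 then show ?thesis using m by (simp add: cx_def ct_def dec_def)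
  next
    case 3
    have c: "cx k m = 2*(q-k)+1" "ct k m = 1" using 3 E by (auto simp: cx_def ct_def)
    show ?thesis unfolding c dec_def using 3 E by simp
  qed
next
  case (O q)
  consider "m < 2*k" | "6*k \<le> m" | "2*k \<le> m" "m + 1 < 4*k" | "m + 1 = 4*k" | "4*k < m + 1" "m < 6*k" by linarith
  then show ?thesis
  proof cases
    case 1 then show ?thesis by (simp add: cx_def ct_def dec_def)
  next
    case 2 then show ?thesis using m by (simp add: cx_def ct_def dec_def)
  next
    case 3
    have c: "cx k m = 2*(q+1)" "ct k m = 1" using 3 O k by (auto simp: cx_def ct_def)
    show ?thesis unfolding c dec_def using 3 O by simp
  next
    case 4
    have c: "cx k m = 0" "ct k m = 1" using 4 O k by (auto simp: cx_def ct_def)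
    show ?thesis unfolding c dec_def using 4 O by simp
  next
    case 5
    have c: "cx k m = 2*(q+1-2*k)" "ct k m = 1" using 5 O k by (auto simp: cx_def ct_def)
    show ?thesis unfolding c dec_def using 5 O by (simp; arith)
  qed
qed

lemma code_inj: assumes "k \<ge> 2" "m < 8*k" "m' < 8*k" "cx k m = cx k m'" "ct k m = ct k m'" shows "m = m'"
  using dec_code[OF assms(1,2)] dec_code[OF assms(1,3)] assms(4,5) by metis

lemma h_code: assumes k: "k \<ge> 2" and m: "m < 8*k" shows "{gk k m, gk k (sc k m)} = Ek k (cx k m) (ct k m)"
proof (cases m rule: evod)
  case (E q)
  have ne: "2*q+1 \<noteq> 8*k" by presburger
  have s: "sc k m = 2*q+1" using E ne by (simp add: sc_def)
  have g1: "gk k m = (if 2*q < 4*k then 2*q else 2*q - 4*k)" using E gk_ev by simp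
  have g2: "gk k (sc k m) = (if 2*q+1 < 2*k then 2*q+1 else if 2*q+1 < 6*k then 2*q+1-2*k else 2*q+1-4*k)"
    using s gk_od by simp
  consider "m < 2*k" | "2*k \<le> m" "m < 4*k" | "4*k \<le> m" "m < 6*k" | "6*k \<le> m" by linarith
  then show ?thesis
  proof cases
    case 1
    have c: "cx k m = 2*q" "ct k m = 0" using 1 E by (auto simp: cx_def ct_def)
    show ?thesis unfolding g1 g2 c Ek_def using 1 E by auto
  next
    case 2
    have c: "cx k m = 2*q+1-2*k" "ct k m = 1" using 2 E by (auto simp: cx_def ct_def)
    show ?thesis unfolding g1 g2 c Ek_def using 2 E by auto
  next
    case 3
    have c: "cx k m = 2*q+1-2*k" "ct k m = 1" using 3 E by (auto simp: cx_def ct_def)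
    show ?thesis unfolding g1 g2 c Ek_def using 3 E m by auto
  next
    case 4
    have c: "cx k m = 2*q-4*k" "ct k m = 0" using 4 E by (auto simp: cx_def ct_def)
    have "2*q+1 < 8*k" using ne m E by linarith
    then show ?thesis unfolding g1 g2 c Ek_def using 4 E by auto
  qed
next
  case (O q)
  have s: "sc k m = (if 2*q+2 = 8*k then 0 else 2*q+2)" using O by (simp add: sc_def)
  have g1: "gk k m = (if 2*q+1 < 2*k then 2*q+1 else if 2*q+1 < 6*k then 2*q+1-2*k else 2*q+1-4*k)"
    using O gk_od by simp
  have g2: "gk k (sc k m) = (if 2*q+2 = 8*k then 0 else if 2*q+2 < 4*k then 2*q+2 else 2*q+2 - 4*k)"
    using s gk_ev2 by (simp add: gk_def)
  consider "m < 2*k" | "2*k \<le> m" "m + 1 < 4*k" | "m + 1 = 4*k" | "4*k < m + 1" "m < 6*k" | "6*k \<le> m" by linarith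
  then show ?thesis
  proof cases
    case 1
    have c: "cx k m = 2*q+1" "ct k m = 0" using 1 O by (auto simp: cx_def ct_def)
    show ?thesis unfolding g1 g2 c Ek_def using 1 O by auto
  next
    case 2
    have c: "cx k m = 2*q+2" "ct k m = 1" using 2 O by (auto simp: cx_def ct_def)
    show ?thesis unfolding g1 g2 c Ek_def using 2 O by auto
  next
    case 3
    have c: "cx k m = 0" "ct k m = 1" using 3 O by (auto simp: cx_def ct_def)
    show ?thesis unfolding g1 g2 c Ek_def using 3 O k by auto
  next
    case 4
    have c: "cx k m = 2*q+2-4*k" "ct k m = 1" using 4 O by (auto simp: cx_def ct_def)
    show ?thesis unfolding g1 g2 c Ek_def using 4 O k by auto
  next
    case 5
    have c: "cx k m = 2*q+1-4*k" "ct k m = 0" using 5 O by (auto simp: cx_def ct_def)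
    show ?thesis unfolding g1 g2 c Ek_def using 5 O k m by auto
  qed
qed


lemma code_rng: "m < 8*k \<Longrightarrow> cx k m < 4*k \<and> ct k m \<le> 1"
  by (auto simp: cx_def ct_def)

lemma hinj: assumes "k \<ge> 2" "m < 8*k" "m' < 8*k"
  "{gk k m, gk k (sc k m)} = {gk k m', gk k (sc k m')}" shows "m = m'"
proof -
  have "Ek k (cx k m) (ct k m) = Ek k (cx k m') (ct k m')" using assms h_code by metis
  then have "cx k m = cx k m' \<and> ct k m = ct k m'" using Ek_inj[OF assms(1)] code_rng assms(2,3) by blast
  then show ?thesis using code_inj assms(1,2,3) by blast
qed

lemma modchar: fixes a s N :: int assumes "0<N" "-N<a" "a<N" "0<s" "s<N"
  shows "(a mod N = s mod N \<or> a mod N = (-s) mod N) \<longleftrightarrow> (a = s \<or> a = s - N \<or> a = -s \<or> a = N - s)"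
proof -
  have m1: "s mod N = s" using assms by simp
  have m2: "(-s) mod N = N - s"
  proof -
    have "(-s) mod N = (-s + N) mod N" by simp
    also have "\<dots> = -s + N" using assms by (intro mod_pos_pos_trivial) auto
    finally show ?thesis by simp
  qed
  have m3: "a mod N = (if a \<ge> 0 then a else a + N)"
  proof (cases "a \<ge> 0")
    case True then show ?thesis using assms by simp
  next
    case False
    have "a mod N = (a + N) mod N" by simp
    also have "\<dots> = a + N" using assms False by (intro mod_pos_pos_trivial) auto
    finally show ?thesis using False by simp
  qed
  show ?thesis unfolding m1 m2 m3 using assms by auto
qed

lemma cmem: assumes "k \<ge> 2" "u < 4*k" "v < 4*k"
  shows "(\<exists>s\<in>{1, 2 * int k - 1}. (int u - int v) mod int (4*k) = s mod int (4*k) \<or> (int u - int v) mod int (4*k) = (- s) mod int (4*k))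
   \<longleftrightarrow> (int u - int v \<in> {1, 1 - 4*int k, -1, 4*int k - 1, 2*int k - 1, -2*int k - 1, 1 - 2*int k, 2*int k + 1})"
proof -
  have N: "int (4*k) = 4 * int k" by simp
  have A: "- int (4*k) < int u - int v" "int u - int v < int (4*k)" using assms by auto
  have B1: "(int u - int v) mod int (4*k) = 1 mod int (4*k) \<or> (int u - int v) mod int (4*k) = (- 1) mod int (4*k)
    \<longleftrightarrow> (int u - int v = 1 \<or> int u - int v = 1 - int (4*k) \<or> int u - int v = -1 \<or> int u - int v = int (4*k) - 1)"
    using assms A by (intro modchar) auto
  have B2: "(int u - int v) mod int (4*k) = (2 * int k - 1) mod int (4*k) \<or> (int u - int v) mod int (4*k) = (- (2 * int k - 1)) mod int (4*k)
    \<longleftrightarrow> (int u - int v = 2 * int k - 1 \<or> int u - int v = 2 * int k - 1 - int (4*k) \<or> int u - int v = -(2 * int k - 1) \<or> int u - int v = int (4*k) - (2 * int k - 1))"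
    using assms A by (intro modchar) auto
  show ?thesis using B1 B2 unfolding N by auto
qed

lemma hD: assumes "k \<ge> 2" "m < 8*k"
  shows "gk k m \<noteq> gk k (sc k m) \<and> int (gk k m) - int (gk k (sc k m)) \<in> {1, 1 - 4*int k, -1, 4*int k - 1, 2*int k - 1, -2*int k - 1, 1 - 2*int k, 2*int k + 1}"
proof -
  have sc1: "sc k (2*q) = 2*q+1" if "2*q < 8*k" for q using that by (auto simp: sc_def)
  have sc2: "sc k (2*q+1) = (if 2*q+2 = 8*k then 0 else 2*q+2)" for q by (auto simp: sc_def)
  have g0: "gk k 0 = 0" by (simp add: gk_def)
  show ?thesis using assms
    apply (cases m rule: evod)
    apply (simp_all only: sc1 sc2 gk_ev gk_od gk_ev2 g0 split: if_splits)
    apply (auto split: if_splits)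
    done
qed

lemma edge0: assumes "k \<ge> 2" "x < 4*k" shows "\<exists>m<8*k. {gk k m, gk k (sc k m)} = {x, if x+1 < 4*k then x+1 else 0}"
proof (cases "x < 2*k")
  case True
  then show ?thesis using assms by (intro exI[of _ x]) (auto simp: gk_def sc_def)
next
  case False
  then show ?thesis using assms by (intro exI[of _ "x+4*k"]) (auto simp: gk_def sc_def)
qed

lemma edge1: assumes "k \<ge> 2" "x < 4*k" shows "\<exists>m<8*k. {gk k m, gk k (sc k m)} = {x, if x+2*k-1 < 4*k then x+2*k-1 else x+2*k-1-4*k}"
proof (cases x rule: evod)
  case (O q)
  then show ?thesis using assms by (intro exI[of _ "x+2*k-1"]) (auto simp: gk_def sc_def)
next
  case (E q)
  consider "x = 0" | "0 < x" "x \<le> 2*k" | "2*k < x" by linarith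
  then show ?thesis
  proof cases
    case 1 then show ?thesis using assms by (intro exI[of _ "4*k-1"]) (auto simp: gk_def sc_def)
  next
    case 2 then show ?thesis using assms E by (intro exI[of _ "x+4*k-1"]) (auto simp: gk_def sc_def)
  next
    case 3 then show ?thesis using assms E by (intro exI[of _ "x-1"]) (auto simp: gk_def sc_def)
  qed
qed



lemma csup: assumes k: "k \<ge> 2" and u: "u < 4*k" and v: "v < 4*k"
  and d: "int u - int v \<in> {1, 1 - 4*int k, -1, 4*int k - 1, 2*int k - 1, -2*int k - 1, 1 - 2*int k, 2*int k + 1}"
  shows "\<exists>m<8*k. {gk k m, gk k (sc k m)} = {u, v}"
proof -
  have s: "{a, b} = {b, a}" for a b :: nat by auto
  from d have "int u - int v = 1 \<or> int u - int v = 1 - 4*int k \<or> int u - int v = -1 \<or> int u - int v = 4*int k - 1 \<or>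
    int u - int v = 2*int k - 1 \<or> int u - int v = -2*int k - 1 \<or> int u - int v = 1 - 2*int k \<or> int u - int v = 2*int k + 1"
    by simp
  then show ?thesis
  proof (elim disjE)
    assume "int u - int v = 1" then have h: "u = v + 1" by linarith
    show ?thesis using edge0[OF k v] h u by (simp add: s)
  next
    assume "int u - int v = 1 - 4*int k" then have h: "u = 0 \<and> v = 4*k-1" using u v by linarith
    show ?thesis using edge0[OF k v] h k by (simp add: s)
  next
    assume "int u - int v = -1" then have h: "v = u + 1" by linarith
    show ?thesis using edge0[OF k u] h v by simp
  next
    assume "int u - int v = 4*int k - 1" then have h: "u = 4*k-1 \<and> v = 0" using u v by linarith
    show ?thesis using edge0[OF k u] h k by simp
  next
    assume "int u - int v = 2*int k - 1" then have h: "u = v + 2*k - 1" using k by linarith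
    show ?thesis using edge1[OF k v] h u by (simp add: s)
  next
    assume "int u - int v = -2*int k - 1" then have h: "v = u + 2*k + 1" by linarith
    show ?thesis using edge1[OF k v] h v k by (simp add: s)
  next
    assume "int u - int v = 1 - 2*int k" then have h: "v = u + 2*k - 1" using k by linarith
    show ?thesis using edge1[OF k u] h v by simp
  next
    assume "int u - int v = 2*int k + 1" then have h: "u = v + 2*k + 1" by linarith
    show ?thesis using edge1[OF k u] h u k by simp
  qed
qed

theorem mainTheorem11:
  fixes k :: nat
  assumes "k \<ge> 2"
  shows "mgraph_iso
     (identify (cycle_graph (8 * k))
        ({{2 * i, 4 * k + 2 * i} | i. i \<le> 2 * k - 1} \<union>
         {{2 * j + 1, 2 * k + 2 * j + 1} | j. j \<le> k - 1 \<or> (2 * k \<le> j \<and> j \<le> 3 * k - 1)}))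
     (circulant (4 * k) {1, 2 * int k - 1})"
proof -
  have P: "{{2 * i, 4 * k + 2 * i} | i. i \<le> 2 * k - 1} \<union>
         {{2 * j + 1, 2 * k + 2 * j + 1} | j. j \<le> k - 1 \<or> (2 * k \<le> j \<and> j \<le> 3 * k - 1)} = PP k"
    by (simp add: PP_def)
  define f where "f = (\<lambda>B. gk k (Min B))"
  define A where "A = {0..<8*k}"
  define h where "h = (\<lambda>m. {gk k m, gk k (sc k m)})"
  have fA: "finite A" by (simp add: A_def)
  have idm': "identify_map (PP k) m = blk k m" if "m \<in> A" for m using idm[OF assms] that by (simp add: A_def)
  have fb: "f (blk k m) = gk k m" if "m \<in> A" for m using gblk that by (simp add: f_def A_def)
  have V: "fst (identify (cycle_graph (8*k)) (PP k)) = blk k ` A"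
    unfolding identify_def cycle_graph_def fst_conv A_def[symmetric] using idm' by (auto simp: image_iff)
  have inj: "inj_on f (blk k ` A)"
  proof (rule inj_onI)
    fix x y assume "x \<in> blk k ` A" "y \<in> blk k ` A" "f x = f y"
    then obtain m m' where "m \<in> A" "m' \<in> A" "x = blk k m" "y = blk k m'" "f (blk k m) = f (blk k m')" by auto
    then have "gk k m = gk k m'" "m < 8*k" "m' < 8*k" using fb by (auto simp: A_def)
    then show "x = y" using ginj \<open>x = blk k m\<close> \<open>y = blk k m'\<close> by blast
  qed
  have img: "f ` blk k ` A = {0..<4*k}"
  proof -
    have "f ` blk k ` A = gk k ` A" using fb by (auto simp: image_iff)
    also have "\<dots> = {0..<4*k}" using grange gsurj by (force simp: A_def image_iff)
    finally show ?thesis .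
  qed
  have bij: "bij_betw f (blk k ` A) {0..<4*k}" using inj img by (simp add: bij_betw_def)
  have E1: "image_mset (image f) (snd (identify (cycle_graph (8*k)) (PP k))) = image_mset h (mset_set A)"
  proof -
    have "image_mset (image f) (snd (identify (cycle_graph (8*k)) (PP k)))
       = image_mset (\<lambda>i. f ` identify_map (PP k) ` {i, (i + 1) mod (8*k)}) (mset_set A)"
      unfolding identify_def cycle_graph_def snd_conv A_def[symmetric] by (simp add: multiset.map_comp comp_def)
    also have "\<dots> = image_mset h (mset_set A)"
    proof (rule image_mset_cong)
      fix i assume "i \<in># mset_set A"
      then have i: "i \<in> A" using fA by simp
      then have s: "sc k i \<in> A" "(i + 1) mod (8*k) = sc k i" using sc_lt sc_mod by (auto simp: A_def)
      show "f ` identify_map (PP k) ` {i, (i + 1) mod (8*k)} = h i"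
        using i s idm' fb by (simp add: h_def)
    qed
    finally show ?thesis .
  qed
  have hinj': "inj_on h A" using hinj[OF assms] by (auto simp: inj_on_def h_def A_def)
  have HC: "h ` A = {{u, v} | u v. u < 4*k \<and> v < 4*k \<and> u \<noteq> v \<and>
      (\<exists>s\<in>{1, 2 * int k - 1}. (int u - int v) mod int (4*k) = s mod int (4*k) \<or> (int u - int v) mod int (4*k) = (- s) mod int (4*k))}"
  proof (intro equalityI subsetI)
    fix e assume "e \<in> h ` A"
    then obtain m where m: "m < 8*k" "e = {gk k m, gk k (sc k m)}" by (auto simp: h_def A_def)
    have r: "gk k m < 4*k" "gk k (sc k m) < 4*k" using grange sc_lt m by auto
    show "e \<in> {{u, v} | u v. u < 4*k \<and> v < 4*k \<and> u \<noteq> v \<and>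
      (\<exists>s\<in>{1, 2 * int k - 1}. (int u - int v) mod int (4*k) = s mod int (4*k) \<or> (int u - int v) mod int (4*k) = (- s) mod int (4*k))}"
      using m r hD[OF assms m(1)] cmem[OF assms r] by blast
  next
    fix e assume "e \<in> {{u, v} | u v. u < 4*k \<and> v < 4*k \<and> u \<noteq> v \<and>
      (\<exists>s\<in>{1, 2 * int k - 1}. (int u - int v) mod int (4*k) = s mod int (4*k) \<or> (int u - int v) mod int (4*k) = (- s) mod int (4*k))}"
    then obtain u v where uv: "e = {u, v}" "u < 4*k" "v < 4*k"
      "\<exists>s\<in>{1, 2 * int k - 1}. (int u - int v) mod int (4*k) = s mod int (4*k) \<or> (int u - int v) mod int (4*k) = (- s) mod int (4*k)"
      by blast
    have dd: "int u - int v \<in> {1, 1 - 4*int k, -1, 4*int k - 1, 2*int k - 1, -2*int k - 1, 1 - 2*int k, 2*int k + 1}"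
      using cmem[OF assms uv(2,3)] uv(4) by (rule iffD1)
    obtain m where mm: "m < 8*k" "{gk k m, gk k (sc k m)} = {u, v}"
      using csup[OF assms uv(2,3) dd] by blast
    have "h m = e" using mm(2) uv(1) by (simp add: h_def)
    moreover have "m \<in> A" using mm(1) by (simp add: A_def)
    ultimately show "e \<in> h ` A" by blast
  qed
  have E: "image_mset (image f) (snd (identify (cycle_graph (8*k)) (PP k))) = snd (circulant (4 * k) {1, 2 * int k - 1})"
    unfolding E1 image_mset_mset_set[OF hinj'] HC circulant_def snd_conv by simp
  have Vc: "fst (circulant (4 * k) {1, 2 * int k - 1}) = {0..<4*k}" by (simp add: circulant_def)
  show ?thesis unfolding P mgraph_iso_def V Vc using bij E by blast
qed

end
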